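(* Let $X=(X_1,\dots,X_T)$ be a random vector of nonnegative integer-valued random variables with finite second moments and $\mathrm{Var}(X_t)>0$ for all $t$. For $p\in(0,1]$, let $Y^{(p)}=(Y_1,\dots,Y_T)$ be defined by: conditionally on $X$, the $Y_t$ are independent with $Y_t\sim B(X_t,p)$ (Binomial with $X_t$ trials and success probability $p$). Then for all $i,j$, the magnitude $|\rho_{Y_i,Y_j}|$ of the Pearson correlation between $Y_i$ and $Y_j$ is a monotonically non-decreasing function of $p$ on $(0,1]$.
   Context: $X$ is the ground truth time series of event counts and $Y$ the observed signal in which each event is observed independently with probability $p$ (the sampling rate). The Pearson correlation is $\rho_{Y_i,Y_j}=\mathrm{Cov}(Y_i,Y_j)/(\sigma_{Y_i}\sigma_{Y_j})$. *)

theory Defs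
  imports "HOL-Probability.Probability"
begin

definition pmf_cov :: "'a pmf \<Rightarrow> ('a \<Rightarrow> real) \<Rightarrow> ('a \<Rightarrow> real) \<Rightarrow> real" where
  "pmf_cov M f g = measure_pmf.expectation M
     (\<lambda>x. (f x - measure_pmf.expectation M f) * (g x - measure_pmf.expectation M g))"

definition pmf_var :: "'a pmf \<Rightarrow> ('a \<Rightarrow> real) \<Rightarrow> real" where
  "pmf_var M f = measure_pmf.variance M f"

definition pearson :: "'a pmf \<Rightarrow> ('a \<Rightarrow> real) \<Rightarrow> ('a \<Rightarrow> real) \<Rightarrow> real" where
  "pearson M f g = pmf_cov M f g / (sqrt (pmf_var M f) * sqrt (pmf_var M g))"

definition thinned :: "real \<Rightarrow> ('t::finite \<Rightarrow> nat) pmf \<Rightarrow> ('t \<Rightarrow> nat) pmf" where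
  "thinned p X = bind_pmf X (\<lambda>x. Pi_pmf UNIV 0 (\<lambda>t. binomial_pmf (x t) p))"

end

theory Submission
  imports Defs
begin
lemma nn_const_pmf: "(\<integral>\<^sup>+x. c \<partial>measure_pmf M) = c"
  by (simp add: measure_pmf.emeasure_space_1)

lemma ennr_ma2: "0 \<le> a \<Longrightarrow> 0 \<le> b \<Longrightarrow> 0 \<le> c \<Longrightarrow> 0 \<le> d \<Longrightarrow> a * b + c * d = e \<Longrightarrow>
   ennreal a * ennreal b + ennreal c * ennreal d = ennreal e"
  by (metis ennreal_mult ennreal_plus mult_nonneg_nonneg)

lemma ptw1: "ennreal (real (Suc k)) = ennreal 1 + ennreal (real k)"
  using ennreal_plus[of 1 "real k"] by (simp add: add.commute)

lemma ptw2: "ennreal ((real (Suc k))\<^sup>2) = (ennreal 1 + ennreal 2 * ennreal (real k)) + ennreal ((real k)\<^sup>2)"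
proof -
  have "(real (Suc k))\<^sup>2 = (1 + 2 * real k) + (real k)\<^sup>2" by (simp add: power2_eq_square algebra_simps)
  hence "ennreal ((real (Suc k))\<^sup>2) = ennreal (1 + 2 * real k) + ennreal ((real k)\<^sup>2)"
    by (simp only:) (rule ennreal_plus; simp)
  also have "ennreal (1 + 2 * real k) = ennreal 1 + ennreal (2 * real k)" by (rule ennreal_plus; simp)
  also have "ennreal (2 * real k) = ennreal 2 * ennreal (real k)" by (rule ennreal_mult; simp)
  finally show ?thesis .
qed

lemma ennr3: "0 \<le> a \<Longrightarrow> 0 \<le> b \<Longrightarrow> ennreal 1 + ennreal 2 * ennreal a + ennreal b = ennreal (1 + 2*a + b)"
proof -
  assume a: "0 \<le> a" and b: "0 \<le> b"
  have "ennreal (1 + 2*a + b) = ennreal (1 + 2*a) + ennreal b" using a b by (intro ennreal_plus) auto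
  also have "ennreal (1 + 2*a) = ennreal 1 + ennreal (2*a)" using a by (intro ennreal_plus) auto
  also have "ennreal (2*a) = ennreal 2 * ennreal a" using a by (intro ennreal_mult) auto
  finally show ?thesis by simp
qed

lemma bin_step:
  assumes p: "p \<in> {0..1}"
  shows "(\<integral>\<^sup>+k. f k \<partial>measure_pmf (binomial_pmf (Suc n) p)) =
     (\<integral>\<^sup>+k. f (Suc k) \<partial>measure_pmf (binomial_pmf n p)) * ennreal p + (\<integral>\<^sup>+k. f k \<partial>measure_pmf (binomial_pmf n p)) * ennreal (1 - p)"
  using p by (simp add: binomial_pmf_Suc)

lemma bin1:
  assumes p: "p \<in> {0..1}"
  shows "(\<integral>\<^sup>+k. ennreal (real k) \<partial>measure_pmf (binomial_pmf n p)) = ennreal (real n * p)"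
proof (induction n)
  case 0
  then show ?case using p by (simp add: binomial_pmf_0)
next
  case (Suc n)
  have e: "(\<integral>\<^sup>+k. ennreal (real (Suc k)) \<partial>measure_pmf (binomial_pmf n p)) = ennreal (1 + real n * p)"
  proof -
    have "(\<integral>\<^sup>+k. ennreal (real (Suc k)) \<partial>measure_pmf (binomial_pmf n p))
       = (\<integral>\<^sup>+k. ennreal 1 + ennreal (real k) \<partial>measure_pmf (binomial_pmf n p))"
      by (intro nn_integral_cong) (rule ptw1)
    also have "\<dots> = ennreal 1 + ennreal (real n * p)"
      by (subst nn_integral_add) (auto simp: Suc nn_const_pmf simp del: ennreal_1)
    also have "\<dots> = ennreal (1 + real n * p)" using p by (intro ennreal_plus[symmetric]) auto
    finally show ?thesis .
  qed
  have "(\<integral>\<^sup>+k. ennreal (real k) \<partial>measure_pmf (binomial_pmf (Suc n) p)) = 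
     ennreal (1 + real n * p) * ennreal p + ennreal (real n * p) * ennreal (1 - p)"
    using p by (simp only: bin_step e Suc)
  also have "\<dots> = ennreal (real (Suc n) * p)"
    by (rule ennr_ma2) (use p in \<open>auto simp: algebra_simps\<close>)
  finally show ?case .
qed

lemma bin2:
  assumes p: "p \<in> {0..1}"
  shows "(\<integral>\<^sup>+k. ennreal ((real k)\<^sup>2) \<partial>measure_pmf (binomial_pmf n p)) = ennreal (real n * p * (1 - p) + (real n * p)\<^sup>2)"
proof (induction n)
  case 0
  then show ?case using p by (simp add: binomial_pmf_0)
next
  case (Suc n)
  have e: "(\<integral>\<^sup>+k. ennreal ((real (Suc k))\<^sup>2) \<partial>measure_pmf (binomial_pmf n p)) = ennreal (1 + 2 * (real n * p) + (real n * p * (1 - p) + (real n * p)\<^sup>2))"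
  proof -
    have "(\<integral>\<^sup>+k. ennreal ((real (Suc k))\<^sup>2) \<partial>measure_pmf (binomial_pmf n p))
       = (\<integral>\<^sup>+k. (ennreal 1 + ennreal 2 * ennreal (real k)) + ennreal ((real k)\<^sup>2) \<partial>measure_pmf (binomial_pmf n p))"
      by (intro nn_integral_cong) (rule ptw2)
    also have "\<dots> = (ennreal 1 + ennreal 2 * ennreal (real n * p)) + ennreal (real n * p * (1 - p) + (real n * p)\<^sup>2)"
      apply (subst nn_integral_add, simp, simp)
      apply (subst nn_integral_add, simp, simp)
      apply (subst nn_integral_cmult, simp)
      by (simp add: Suc bin1[OF p] nn_const_pmf del: ennreal_1 ennreal_plus)
    also have "\<dots> = ennreal (1 + 2 * (real n * p) + (real n * p * (1 - p) + (real n * p)\<^sup>2))" using p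
      by (intro ennr3) auto
    finally show ?thesis .
  qed
  have "(\<integral>\<^sup>+k. ennreal ((real k)\<^sup>2) \<partial>measure_pmf (binomial_pmf (Suc n) p)) = 
     ennreal (1 + 2 * (real n * p) + (real n * p * (1 - p) + (real n * p)\<^sup>2)) * ennreal p + ennreal (real n * p * (1 - p) + (real n * p)\<^sup>2) * ennreal (1 - p)"
    using p by (simp only: bin_step e Suc)
  also have "\<dots> = ennreal (real (Suc n) * p * (1 - p) + (real (Suc n) * p)\<^sup>2)"
  proof -
    have a: "0 \<le> real n * p * (1 - p)" using p by auto
    show ?thesis
      apply (rule ennr_ma2)
      using p a apply (simp_all add: add_nonneg_nonneg)
      by (simp add: algebra_simps power2_eq_square)
  qed
  finally show ?case .
qed
lemma K_marg:
  fixes x :: "'t::finite \<Rightarrow> nat"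
  shows "(\<integral>\<^sup>+y. g (y i) \<partial>measure_pmf (Pi_pmf UNIV 0 (\<lambda>t. binomial_pmf (x t) p)))
       = (\<integral>\<^sup>+k. g k \<partial>measure_pmf (binomial_pmf (x i) p))"
proof -
  have "(\<integral>\<^sup>+k. g k \<partial>measure_pmf (map_pmf (\<lambda>y. y i) (Pi_pmf UNIV 0 (\<lambda>t. binomial_pmf (x t) p))))
     = (\<integral>\<^sup>+y. g (y i) \<partial>measure_pmf (Pi_pmf UNIV 0 (\<lambda>t. binomial_pmf (x t) p)))"
    by simp
  then show ?thesis by (simp add: Pi_pmf_component)
qed

lemma K_prod:
  fixes x :: "'t::finite \<Rightarrow> nat"
  assumes ij: "i \<noteq> j" and p: "p \<in> {0..1}"
  shows "(\<integral>\<^sup>+y. ennreal (real (y i) * real (y j)) \<partial>measure_pmf (Pi_pmf UNIV 0 (\<lambda>t. binomial_pmf (x t) p)))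
       = ennreal (real (x i) * p * (real (x j) * p))"
proof -
  define f where "f = (\<lambda>t (v::nat). if t = i \<or> t = j then ennreal (real v) else 1)"
  have pr: "(\<Prod>t\<in>UNIV. f t (y t)) = ennreal (real (y i) * real (y j))" for y :: "'t \<Rightarrow> nat"
  proof -
    have "(\<Prod>t\<in>UNIV. f t (y t)) = (\<Prod>t\<in>{i,j}. ennreal (real (y t)))"
      unfolding f_def by (subst prod.If_cases) (auto intro!: arg_cong2[where f=prod])
    also have "\<dots> = ennreal (real (y i) * real (y j))" using ij by (simp add: ennreal_mult)
    finally show ?thesis .
  qed
  have "(\<integral>\<^sup>+y. ennreal (real (y i) * real (y j)) \<partial>measure_pmf (Pi_pmf UNIV 0 (\<lambda>t. binomial_pmf (x t) p)))
      = (\<integral>\<^sup>+y. (\<Prod>t\<in>UNIV. f t (y t)) \<partial>measure_pmf (Pi_pmf UNIV 0 (\<lambda>t. binomial_pmf (x t) p)))"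
    by (simp add: pr)
  also have "\<dots> = (\<Prod>t\<in>UNIV. nn_integral (binomial_pmf (x t) p) (f t))"
    by (rule nn_integral_prod_Pi_pmf) simp
  also have "\<dots> = (\<Prod>t\<in>UNIV. if t \<in> {i,j} then ennreal (real (x t) * p) else 1)"
    unfolding f_def using p by (intro prod.cong) (auto simp: bin1 nn_const_pmf)
  also have "\<dots> = (\<Prod>t\<in>{i,j}. ennreal (real (x t) * p))"
    by (subst prod.If_cases) (auto intro!: arg_cong2[where f=prod])
  also have "\<dots> = ennreal (real (x i) * p * (real (x j) * p))" using ij p by (simp add: ennreal_mult)
  finally show ?thesis .
qed
lemma thin_mom:
  fixes X :: "('t::finite \<Rightarrow> nat) pmf" and f g :: "('t \<Rightarrow> nat) \<Rightarrow> real"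
  assumes K: "\<And>x. (\<integral>\<^sup>+y. ennreal (f y) \<partial>measure_pmf (Pi_pmf UNIV 0 (\<lambda>t. binomial_pmf (x t) p))) = ennreal (g x)"
   and gi: "integrable X g" and g0: "\<And>x. 0 \<le> g x" and f0: "\<And>y. 0 \<le> f y"
  shows "integrable (thinned p X) f \<and> measure_pmf.expectation (thinned p X) f = measure_pmf.expectation X g"
proof -
  have "(\<integral>\<^sup>+y. ennreal (f y) \<partial>measure_pmf (thinned p X)) = (\<integral>\<^sup>+x. ennreal (g x) \<partial>measure_pmf X)"
    by (simp add: thinned_def K)
  also have "\<dots> = ennreal (measure_pmf.expectation X g)"
    by (rule nn_integral_eq_integral[OF gi]) (simp add: g0)
  finally have nn: "(\<integral>\<^sup>+y. ennreal (f y) \<partial>measure_pmf (thinned p X)) = ennreal (measure_pmf.expectation X g)" .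
  have i: "integrable (thinned p X) f"
    by (rule integrableI_nn_integral_finite[OF _ _ nn]) (auto simp: f0)
  have "measure_pmf.expectation (thinned p X) f = enn2real (\<integral>\<^sup>+y. ennreal (f y) \<partial>measure_pmf (thinned p X))"
    by (rule integral_eq_nn_integral) (auto simp: f0)
  also have "\<dots> = measure_pmf.expectation X g"
    using nn by (simp add: g0 Bochner_Integration.integral_nonneg)
  finally show ?thesis using i by simp
qed

lemma cov_formula:
  fixes M :: "'a pmf"
  assumes "integrable M f" "integrable M g" "integrable M (\<lambda>x. f x * g x)"
  shows "pmf_cov M f g = measure_pmf.expectation M (\<lambda>x. f x * g x)
     - measure_pmf.expectation M f * measure_pmf.expectation M g"
proof -
  define a where "a = measure_pmf.expectation M f"
  define b where "b = measure_pmf.expectation M g"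
  have "(\<lambda>x. (f x - a) * (g x - b)) = (\<lambda>x. (f x * g x - a * g x) - (b * f x - a * b))"
    by (auto simp: algebra_simps)
  then have "pmf_cov M f g = measure_pmf.expectation M (\<lambda>x. (f x * g x - a * g x) - (b * f x - a * b))"
    by (simp add: pmf_cov_def a_def b_def)
  also have "\<dots> = (measure_pmf.expectation M (\<lambda>x. f x * g x) - a * b) - (b * a - a * b)"
    using assms by (simp add: Bochner_Integration.integral_diff a_def b_def)
  finally show ?thesis by (simp add: a_def b_def algebra_simps)
qed
lemma X_ints:
  fixes X :: "('t::finite \<Rightarrow> nat) pmf"
  assumes sm: "\<And>t. integrable (measure_pmf X) (\<lambda>x. (real (x t))\<^sup>2)"
  shows "integrable X (\<lambda>x. real (x t))" "integrable X (\<lambda>x. real (x i) * real (x j))"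
proof -
  show "integrable X (\<lambda>x. real (x t))"
  proof (rule Bochner_Integration.integrable_bound[OF sm[of t]])
    show "AE x in measure_pmf X. norm (real (x t)) \<le> norm ((real (x t))\<^sup>2)"
    proof (intro AE_I2)
      fix x :: "'t \<Rightarrow> nat"
      show "norm (real (x t)) \<le> norm ((real (x t))\<^sup>2)"
        by (cases "x t") (auto simp: power2_eq_square)
    qed
  qed simp
  show "integrable X (\<lambda>x. real (x i) * real (x j))"
  proof (rule Bochner_Integration.integrable_bound[OF Bochner_Integration.integrable_add[OF sm[of i] sm[of j]]])
    show "AE x in measure_pmf X. norm (real (x i) * real (x j)) \<le> norm ((real (x i))\<^sup>2 + (real (x j))\<^sup>2)"
    proof (intro AE_I2)
      fix x :: "'t \<Rightarrow> nat"
      have "real (x i) * real (x j) \<le> (real (x i))\<^sup>2 + (real (x j))\<^sup>2"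
      proof -
        have "0 \<le> real (x i) * real (x j)" by simp
        then show ?thesis using sum_squares_bound[of "real (x i)" "real (x j)"] by linarith
      qed
      then show "norm (real (x i) * real (x j)) \<le> norm ((real (x i))\<^sup>2 + (real (x j))\<^sup>2)"
        by simp
    qed
  qed simp
qed

lemma thin_var:
  fixes X :: "('t::finite \<Rightarrow> nat) pmf"
  assumes sm: "\<And>t. integrable (measure_pmf X) (\<lambda>x. (real (x t))\<^sup>2)"
    and r: "0 \<le> r" "r \<le> 1"
  shows "integrable (thinned r X) (\<lambda>y. real (y t))"
    "measure_pmf.expectation (thinned r X) (\<lambda>y. real (y t)) = r * measure_pmf.expectation X (\<lambda>x. real (x t))"
    "integrable (thinned r X) (\<lambda>y. (real (y t))\<^sup>2)"
    "pmf_var (thinned r X) (\<lambda>y. real (y t)) = r * (1 - r) * measure_pmf.expectation X (\<lambda>x. real (x t))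
        + r\<^sup>2 * pmf_var X (\<lambda>x. real (x t))"
proof -
  have rr: "r \<in> {0..1}" using r by auto
  have i1: "integrable X (\<lambda>x. real (x t))" using X_ints[OF sm] by blast
  have A: "integrable (thinned r X) (\<lambda>y. real (y t)) \<and>
    measure_pmf.expectation (thinned r X) (\<lambda>y. real (y t)) = measure_pmf.expectation X (\<lambda>x. real (x t) * r)"
    by (rule thin_mom) (use r i1 in \<open>auto simp: K_marg[where g="\<lambda>k. ennreal (real k)"] bin1\<close>)
  then show "integrable (thinned r X) (\<lambda>y. real (y t))"
    "measure_pmf.expectation (thinned r X) (\<lambda>y. real (y t)) = r * measure_pmf.expectation X (\<lambda>x. real (x t))"
    by auto
  have B: "integrable (thinned r X) (\<lambda>y. (real (y t))\<^sup>2) \<and>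
    measure_pmf.expectation (thinned r X) (\<lambda>y. (real (y t))\<^sup>2) = 
    measure_pmf.expectation X (\<lambda>x. real (x t) * r * (1 - r) + (real (x t) * r)\<^sup>2)"
    by (rule thin_mom) (use r i1 sm in \<open>auto simp: K_marg[where g="\<lambda>k. ennreal ((real k)\<^sup>2)"] bin2 power_mult_distrib\<close>)
  then show "integrable (thinned r X) (\<lambda>y. (real (y t))\<^sup>2)" by auto
  have EB: "measure_pmf.expectation X (\<lambda>x. real (x t) * r * (1 - r) + (real (x t) * r)\<^sup>2)
     = r * (1 - r) * measure_pmf.expectation X (\<lambda>x. real (x t)) + r\<^sup>2 * measure_pmf.expectation X (\<lambda>x. (real (x t))\<^sup>2)"
    using i1 sm[of t] by (simp add: power_mult_distrib algebra_simps)
  have eq1: "pmf_var (thinned r X) (\<lambda>y. real (y t)) = measure_pmf.expectation (thinned r X) (\<lambda>y. (real (y t))\<^sup>2)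
        - (measure_pmf.expectation (thinned r X) (\<lambda>y. real (y t)))\<^sup>2"
    unfolding pmf_var_def using A B by (intro measure_pmf.variance_eq) auto
  have eq2: "pmf_var X (\<lambda>x. real (x t)) = measure_pmf.expectation X (\<lambda>x. (real (x t))\<^sup>2) - (measure_pmf.expectation X (\<lambda>x. real (x t)))\<^sup>2"
    unfolding pmf_var_def using i1 sm[of t] by (intro measure_pmf.variance_eq) auto
  show "pmf_var (thinned r X) (\<lambda>y. real (y t)) = r * (1 - r) * measure_pmf.expectation X (\<lambda>x. real (x t))
        + r\<^sup>2 * pmf_var X (\<lambda>x. real (x t))"
    unfolding eq1 eq2 using A B EB by (simp add: algebra_simps power_mult_distrib)
qed

lemma thin_cov:
  fixes X :: "('t::finite \<Rightarrow> nat) pmf"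
  assumes sm: "\<And>t. integrable (measure_pmf X) (\<lambda>x. (real (x t))\<^sup>2)"
    and r: "0 \<le> r" "r \<le> 1" and ij: "i \<noteq> j"
  shows "pmf_cov (thinned r X) (\<lambda>y. real (y i)) (\<lambda>y. real (y j)) = r\<^sup>2 * pmf_cov X (\<lambda>x. real (x i)) (\<lambda>x. real (x j))"
proof -
  have rr: "r \<in> {0..1}" using r by auto
  note XI = X_ints[OF sm]
  have C: "integrable (thinned r X) (\<lambda>y. real (y i) * real (y j)) \<and>
    measure_pmf.expectation (thinned r X) (\<lambda>y. real (y i) * real (y j)) = 
    measure_pmf.expectation X (\<lambda>x. real (x i) * r * (real (x j) * r))"
  proof (rule thin_mom)
    have "integrable X (\<lambda>x. (real (x i) * real (x j)) * r\<^sup>2)"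
      using XI(2)[of i j] by simp
    then show "integrable X (\<lambda>x. real (x i) * r * (real (x j) * r))"
      by (simp add: power2_eq_square algebra_simps)
  qed (use r XI in \<open>auto simp: K_prod[OF ij rr]\<close>)
  have EC: "measure_pmf.expectation X (\<lambda>x. real (x i) * r * (real (x j) * r)) = r\<^sup>2 * measure_pmf.expectation X (\<lambda>x. real (x i) * real (x j))"
    by (simp add: power2_eq_square algebra_simps)
  have "pmf_cov (thinned r X) (\<lambda>y. real (y i)) (\<lambda>y. real (y j)) =
     measure_pmf.expectation (thinned r X) (\<lambda>y. real (y i) * real (y j))
     - measure_pmf.expectation (thinned r X) (\<lambda>y. real (y i)) * measure_pmf.expectation (thinned r X) (\<lambda>y. real (y j))"
    using C thin_var[OF sm r] by (intro cov_formula) auto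
  also have "\<dots> = r\<^sup>2 * (measure_pmf.expectation X (\<lambda>x. real (x i) * real (x j)) 
     - measure_pmf.expectation X (\<lambda>x. real (x i)) * measure_pmf.expectation X (\<lambda>x. real (x j)))"
    using C EC thin_var[OF sm r] by (simp add: power2_eq_square algebra_simps)
  also have "measure_pmf.expectation X (\<lambda>x. real (x i) * real (x j)) 
     - measure_pmf.expectation X (\<lambda>x. real (x i)) * measure_pmf.expectation X (\<lambda>x. real (x j))
     = pmf_cov X (\<lambda>x. real (x i)) (\<lambda>x. real (x j))"
    using XI by (intro cov_formula[symmetric]) auto
  finally show ?thesis .
qed

lemma resc:
  fixes C Vi Vj mi mj r :: real
  assumes r: "0 < r"
  shows "\<bar>r\<^sup>2*C / (sqrt (r*(1-r)*mi + r\<^sup>2*Vi) * sqrt (r*(1-r)*mj + r\<^sup>2*Vj))\<bar>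
     = \<bar>C / (sqrt (Vi + (1/r - 1)*mi) * sqrt (Vj + (1/r - 1)*mj))\<bar>"
proof -
  have e: "r*(1-r)*m + r\<^sup>2*V = r\<^sup>2 * (V + (1/r - 1)*m)" for m V
    using r by (simp add: field_simps power2_eq_square)
  have s: "sqrt (r\<^sup>2 * A) = r * sqrt A" for A
    using r by (simp add: real_sqrt_mult)
  show ?thesis unfolding e s using r
    by (simp add: abs_divide abs_mult power2_eq_square)
qed

lemma final_ineq:
  fixes C Vi Vj mi mj p q :: real
  assumes Vi: "0 < Vi" and Vj: "0 < Vj" and mi: "0 \<le> mi" and mj: "0 \<le> mj" and p: "0 < p" and pq: "p \<le> q" and q: "q \<le> 1"
  shows "\<bar>p\<^sup>2*C / (sqrt (p*(1-p)*mi + p\<^sup>2*Vi) * sqrt (p*(1-p)*mj + p\<^sup>2*Vj))\<bar>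
     \<le> \<bar>q\<^sup>2*C / (sqrt (q*(1-q)*mi + q\<^sup>2*Vi) * sqrt (q*(1-q)*mj + q\<^sup>2*Vj))\<bar>"
proof -
  have q0: "0 < q" using p pq by simp
  have iq: "1/q \<le> 1/p" using p pq by (simp add: frac_le)
  have iq1: "1 \<le> 1/q" using q0 q by simp
  have a1: "Vi + (1/q - 1)*mi \<le> Vi + (1/p - 1)*mi" using iq mi by (simp add: mult_right_mono)
  have a2: "Vj + (1/q - 1)*mj \<le> Vj + (1/p - 1)*mj" using iq mj by (simp add: mult_right_mono)
  have b1: "0 < Vi + (1/q - 1)*mi" using Vi iq1 mi by (smt (verit) mult_nonneg_nonneg)
  have b2: "0 < Vj + (1/q - 1)*mj" using Vj iq1 mj by (smt (verit) mult_nonneg_nonneg)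
  have "sqrt (Vi + (1/q - 1)*mi) * sqrt (Vj + (1/q - 1)*mj) \<le> sqrt (Vi + (1/p - 1)*mi) * sqrt (Vj + (1/p - 1)*mj)"
    using a1 a2 b1 b2 by (intro mult_mono) auto
  moreover have "0 < sqrt (Vi + (1/q - 1)*mi) * sqrt (Vj + (1/q - 1)*mj)" using b1 b2 by simp
  ultimately have "\<bar>C\<bar> / (sqrt (Vi + (1/p - 1)*mi) * sqrt (Vj + (1/p - 1)*mj)) \<le> \<bar>C\<bar> / (sqrt (Vi + (1/q - 1)*mi) * sqrt (Vj + (1/q - 1)*mj))"
    by (intro divide_left_mono) auto
  moreover have "0 < Vi + (1/p - 1)*mi" "0 < Vj + (1/p - 1)*mj" using b1 b2 a1 a2 by auto
  ultimately show ?thesis unfolding resc[OF p] resc[OF q0] using b1 b2 by (simp add: abs_divide abs_mult)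
qed

lemma pearson_self:
  fixes X :: "('t::finite \<Rightarrow> nat) pmf"
  assumes sm: "\<And>t. integrable (measure_pmf X) (\<lambda>x. (real (x t))\<^sup>2)"
    and vp: "pmf_var X (\<lambda>x. real (x t)) > 0"
    and r: "0 < r" "r \<le> 1"
  shows "pearson (thinned r X) (\<lambda>y. real (y t)) (\<lambda>y. real (y t)) = 1"
proof -
  have m: "0 \<le> measure_pmf.expectation X (\<lambda>x. real (x t))"
    by (rule Bochner_Integration.integral_nonneg) simp
  have "0 < r * (1 - r) * measure_pmf.expectation X (\<lambda>x. real (x t)) + r\<^sup>2 * pmf_var X (\<lambda>x. real (x t))"
    using r m vp by (intro add_nonneg_pos) auto
  then have v: "0 < pmf_var (thinned r X) (\<lambda>y. real (y t))"
    using thin_var(4)[OF sm, of r t] r by simp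
  have c: "pmf_cov (thinned r X) (\<lambda>y. real (y t)) (\<lambda>y. real (y t)) = pmf_var (thinned r X) (\<lambda>y. real (y t))"
    unfolding pmf_cov_def pmf_var_def by (simp add: power2_eq_square)
  show ?thesis unfolding pearson_def c using v by simp
qed

theorem corollary2:
  fixes X :: "('t::finite \<Rightarrow> nat) pmf" and i j :: 't and p q :: real
  assumes second_moments: "\<And>t. integrable (measure_pmf X) (\<lambda>x. (real (x t))\<^sup>2)"
    and var_pos: "\<And>t. pmf_var X (\<lambda>x. real (x t)) > 0"
    and p_pos: "0 < p" and pq: "p \<le> q" and q_le: "q \<le> 1"
  shows "\<bar>pearson (thinned p X) (\<lambda>y. real (y i)) (\<lambda>y. real (y j))\<bar>
         \<le> \<bar>pearson (thinned q X) (\<lambda>y. real (y i)) (\<lambda>y. real (y j))\<bar>"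
proof (cases "i = j")
  case True
  then show ?thesis
    using pearson_self[OF second_moments var_pos, of p] pearson_self[OF second_moments var_pos, of q]
      p_pos pq q_le by simp
next
  case False
  have m: "0 \<le> measure_pmf.expectation X (\<lambda>x. real (x t))" for t
    by (rule Bochner_Integration.integral_nonneg) simp
  have p1: "0 \<le> p" "p \<le> 1" "0 \<le> q" "q \<le> 1" using p_pos pq q_le by auto
  show ?thesis
    unfolding pearson_def
      thin_cov[OF second_moments p1(1,2) False] thin_cov[OF second_moments p1(3,4) False]
      thin_var(4)[OF second_moments p1(1,2)] thin_var(4)[OF second_moments p1(3,4)]
    by (rule final_ineq[OF var_pos var_pos m m p_pos pq q_le])
qed

end
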